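(* Let $\Pi$ be a program with nested expressions, and let $Q$ be a set of atoms that do not have regular occurrences in the heads of the rules of $\Pi$. For every $q\in Q$ let $\mathit{Def}(q)$ be a formula. Then the program $\Pi\cup\{q\leftarrow\mathit{Def}(q): q\in Q\}$ has the same answer sets as the program $\Pi\cup\{q\leftrightarrow\mathit{Def}(q): q\in Q\}$.
   Context: A literal is an atom $a$ or $\neg a$ (classical negation); a set of literals is consistent if it contains no pair $a,\neg a$. Elementary formulas are literals, $\bot$, $\top$; formulas are built from them with $\mathit{not}$, "," (conjunction), ";" (disjunction). A rule with nested expressions is $\mathit{Head}\leftarrow\mathit{Body}$ with formulas; a program is a set of such rules. For consistent $Z$: $Z\models l$ iff $l\in Z$; $Z\models\top$; $Z\not\models\bot$; $Z\models(F,G)$ iff both; $Z\models(F;G)$ iff at least one; $Z\models\mathit{not}\,F$ iff $Z\not\models F$; $Z$ satisfies a program if for every rule $Z\models\mathit{Body}$ implies $Z\models\mathit{Head}$. Reduct: $F^Z=F$ for elementary $F$; $(F,G)^Z=F^Z,G^Z$; $(F;G)^Z=F^Z;G^Z$; $(\mathit{not}\,F)^Z=\bot$ if $Z\models F$, else $\top$; $\Pi^Z$ consists of the rules $\mathit{Head}^Z\leftarrow\mathit{Body}^Z$. $Z$ is an answer set of a $\mathit{not}$-free program if it is a minimal consistent set satisfying it, and of arbitrary $\Pi$ if it is an answer set of $\Pi^Z$. An occurrence of a formula $F$ in a formula or rule is singular if the symbol immediately before it is the classical negation $\neg$, and regular otherwise. $F\leftrightarrow G$ stands for the pair of rules $F\leftarrow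 G$ and $G\leftarrow F$. *)

theory Defs
  imports Main
begin

text \<open>Literals over atoms of type 'a: an atom or its classical negation.\<close>
datatype 'a lit = Pos 'a | Neg 'a

text \<open>Formulas: elementary formulas (literals, bottom, top) closed under
  not, conjunction (,) and disjunction (;).\<close>
datatype 'a form =
    Lit "'a lit"
  | Bot
  | Top
  | NotF "'a form"
  | Conj "'a form" "'a form"
  | Disj "'a form" "'a form"

text \<open>A rule Head <- Body is a pair (Head, Body); a program is a set of rules.\<close>
type_synonym 'a rule = "'a form \<times> 'a form"
type_synonym 'a program = "'a rule set"

definition consistent :: "'a lit set \<Rightarrow> bool" where
  "consistent Z \<longleftrightarrow> \<not> (\<exists>a. Pos a \<in> Z \<and> Neg a \<in> Z)"

fun sat :: "'a lit set \<Rightarrow> 'a form \<Rightarrow> bool" where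
  "sat Z (Lit l) = (l \<in> Z)"
| "sat Z Bot = False"
| "sat Z Top = True"
| "sat Z (NotF F) = (\<not> sat Z F)"
| "sat Z (Conj F G) = (sat Z F \<and> sat Z G)"
| "sat Z (Disj F G) = (sat Z F \<or> sat Z G)"

definition sat_prog :: "'a lit set \<Rightarrow> 'a program \<Rightarrow> bool" where
  "sat_prog Z P \<longleftrightarrow> (\<forall>(H, B) \<in> P. sat Z B \<longrightarrow> sat Z H)"

fun reduct_form :: "'a form \<Rightarrow> 'a lit set \<Rightarrow> 'a form" where
  "reduct_form (Lit l) Z = Lit l"
| "reduct_form Bot Z = Bot"
| "reduct_form Top Z = Top"
| "reduct_form (NotF F) Z = (if sat Z F then Bot else Top)"
| "reduct_form (Conj F G) Z = Conj (reduct_form F Z) (reduct_form G Z)"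
| "reduct_form (Disj F G) Z = Disj (reduct_form F Z) (reduct_form G Z)"

definition reduct :: "'a program \<Rightarrow> 'a lit set \<Rightarrow> 'a program" where
  "reduct P Z = (\<lambda>(H, B). (reduct_form H Z, reduct_form B Z)) ` P"

definition answer_set_nf :: "'a program \<Rightarrow> 'a lit set \<Rightarrow> bool" where
  "answer_set_nf P Z \<longleftrightarrow> consistent Z \<and> sat_prog Z P \<and>
     (\<forall>Z'. Z' \<subset> Z \<longrightarrow> consistent Z' \<longrightarrow> \<not> sat_prog Z' P)"

definition answer_set :: "'a program \<Rightarrow> 'a lit set \<Rightarrow> bool" where
  "answer_set P Z \<longleftrightarrow> answer_set_nf (reduct P Z) Z"

text \<open>Atoms having a regular occurrence in a formula: an atom a occurs regularly
  iff it occurs as the positive literal a (an occurrence inside the literal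
  \<not>a is singular, since it is immediately preceded by classical negation).\<close>
fun reg_atoms :: "'a form \<Rightarrow> 'a set" where
  "reg_atoms (Lit (Pos a)) = {a}"
| "reg_atoms (Lit (Neg a)) = {}"
| "reg_atoms Bot = {}"
| "reg_atoms Top = {}"
| "reg_atoms (NotF F) = reg_atoms F"
| "reg_atoms (Conj F G) = reg_atoms F \<union> reg_atoms G"
| "reg_atoms (Disj F G) = reg_atoms F \<union> reg_atoms G"

end

theory Submission
  imports Defs
begin

lemma sat_reduct: "sat Z (reduct_form F Z) = sat Z F"
  by (induction F) auto

lemma sat_reduct_mono: "Z1 \<subseteq> Z2 \<Longrightarrow> sat Z1 (reduct_form F Z) \<Longrightarrow> sat Z2 (reduct_form F Z)"
  by (induction F) (auto split: if_splits)

lemma sat_reduct_agree: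
  assumes "\<forall>a \<in> reg_atoms F. (Pos a \<in> Z1 \<longleftrightarrow> Pos a \<in> Z2)"
    and "\<forall>a. Neg a \<in> Z1 \<longleftrightarrow> Neg a \<in> Z2"
  shows "sat Z1 (reduct_form F Z) = sat Z2 (reduct_form F Z)"
  using assms
proof (induction F)
  case (Lit l) then show ?case by (cases l) auto
qed auto

lemma SP: "sat_prog Z (reduct P Z0) \<longleftrightarrow>
   (\<forall>(H, B) \<in> P. sat Z (reduct_form B Z0) \<longrightarrow> sat Z (reduct_form H Z0))"
  unfolding sat_prog_def reduct_def by auto

lemma BC: "(\<forall>(H, B)\<in>{(f q, g q) |q. q \<in> Q}. R H B) \<longleftrightarrow> (\<forall>q\<in>Q. R (f q) (g q))"
  by blast

theorem mainTheorem13: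
  fixes P :: "'a program" and Q :: "'a set" and Def :: "'a \<Rightarrow> 'a form"
  assumes "\<forall>(H, B) \<in> P. \<forall>q \<in> Q. q \<notin> reg_atoms H"
  shows "answer_set (P \<union> {(Lit (Pos q), Def q) | q. q \<in> Q}) Z \<longleftrightarrow>
         answer_set (P \<union> {(Lit (Pos q), Def q) | q. q \<in> Q}
                       \<union> {(Def q, Lit (Pos q)) | q. q \<in> Q}) Z"
proof -
  let ?A = "{(Lit (Pos q), Def q) | q. q \<in> Q}"
  let ?B = "{(Def q, Lit (Pos q)) | q. q \<in> Q}"
  have S1: "sat_prog Y (reduct (P \<union> ?A) Z) \<longleftrightarrow>
     sat_prog Y (reduct P Z) \<and> (\<forall>q\<in>Q. sat Y (reduct_form (Def q) Z) \<longrightarrow> Pos q \<in> Y)" for Y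
    unfolding SP ball_Un BC by simp
  have S2: "sat_prog Y (reduct (P \<union> ?A \<union> ?B) Z) \<longleftrightarrow>
     sat_prog Y (reduct (P \<union> ?A) Z) \<and> (\<forall>q\<in>Q. Pos q \<in> Y \<longrightarrow> sat Y (reduct_form (Def q) Z))" for Y
    unfolding SP ball_Un BC by simp
  show ?thesis
  proof
    assume h: "answer_set (P \<union> ?A) Z"
    then have c: "consistent Z" and s1: "sat_prog Z (reduct (P \<union> ?A) Z)"
      and mn: "\<And>Z'. Z' \<subset> Z \<Longrightarrow> consistent Z' \<Longrightarrow> \<not> sat_prog Z' (reduct (P \<union> ?A) Z)"
      unfolding answer_set_def answer_set_nf_def by auto
    have "sat Z (reduct_form (Def q) Z)" if q: "q \<in> Q" "Pos q \<in> Z" for q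
    proof (rule ccontr)
      assume nd: "\<not> sat Z (reduct_form (Def q) Z)"
      let ?Z' = "Z - {Pos q}"
      have "?Z' \<subset> Z" using q by auto
      moreover have "consistent ?Z'" using c unfolding consistent_def by auto
      moreover have "sat_prog ?Z' (reduct (P \<union> ?A) Z)"
        unfolding S1
      proof
        show "sat_prog ?Z' (reduct P Z)" unfolding SP
        proof (intro ballI, clarify)
          fix H B assume hb: "(H, B) \<in> P" and sb: "sat ?Z' (reduct_form B Z)"
          have "sat Z (reduct_form B Z)" using sb sat_reduct_mono[of ?Z' Z] by blast
          then have "sat Z (reduct_form H Z)" using s1 hb unfolding S1 SP by auto
          moreover have "q \<notin> reg_atoms H" using assms hb q by auto
          ultimately show "sat ?Z' (reduct_form H Z)"
            using sat_reduct_agree[of H ?Z' Z Z] by auto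
        qed
        show "\<forall>q'\<in>Q. sat ?Z' (reduct_form (Def q') Z) \<longrightarrow> Pos q' \<in> ?Z'"
        proof (intro ballI impI)
          fix q' assume q': "q' \<in> Q" "sat ?Z' (reduct_form (Def q') Z)"
          have "sat Z (reduct_form (Def q') Z)" using q'(2) sat_reduct_mono[of ?Z' Z] by blast
          then show "Pos q' \<in> ?Z'" using s1 q'(1) nd unfolding S1 by auto
        qed
      qed
      ultimately show False using mn by blast
    qed
    then show "answer_set (P \<union> ?A \<union> ?B) Z"
      using c s1 mn unfolding answer_set_def answer_set_nf_def S2 by blast
  next
    assume h: "answer_set (P \<union> ?A \<union> ?B) Z"
    then have c: "consistent Z" and s2: "sat_prog Z (reduct (P \<union> ?A \<union> ?B) Z)"
      and mn: "\<And>Z'. Z' \<subset> Z \<Longrightarrow> consistent Z' \<Longrightarrow> \<not> sat_prog Z' (reduct (P \<union> ?A \<union> ?B) Z)"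
      unfolding answer_set_def answer_set_nf_def by auto
    have "\<not> sat_prog Z' (reduct (P \<union> ?A) Z)" if z': "Z' \<subset> Z" "consistent Z'" for Z'
    proof
      assume s': "sat_prog Z' (reduct (P \<union> ?A) Z)"
      define Z0 where "Z0 = Z' - Pos ` Q"
      define T where "T = (\<lambda>S. {q\<in>Q. sat (Z0 \<union> Pos ` S) (reduct_form (Def q) Z)})"
      have monoT: "mono T" unfolding T_def mono_def
        using sat_reduct_mono by (smt (verit, ccfv_SIG) Collect_mono Un_mono image_mono order_refl)
      define S where "S = lfp T"
      have fxp: "T S = S" unfolding S_def using lfp_fixpoint[OF monoT] .
      have pre: "T {q\<in>Q. Pos q \<in> Z'} \<subseteq> {q\<in>Q. Pos q \<in> Z'}"
      proof
        fix q assume "q \<in> T {q\<in>Q. Pos q \<in> Z'}"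
        then have "q \<in> Q" "sat (Z0 \<union> Pos ` {q\<in>Q. Pos q \<in> Z'}) (reduct_form (Def q) Z)"
          unfolding T_def by auto
        moreover have "Z0 \<union> Pos ` {q\<in>Q. Pos q \<in> Z'} \<subseteq> Z'" unfolding Z0_def by auto
        ultimately show "q \<in> {q\<in>Q. Pos q \<in> Z'}"
          using s' sat_reduct_mono unfolding S1 by blast
      qed
      have SZ: "S \<subseteq> {q\<in>Q. Pos q \<in> Z'}" unfolding S_def using lfp_lowerbound[of T, OF pre] .
      define Z2 where "Z2 = Z0 \<union> Pos ` S"
      have Z2sub: "Z2 \<subseteq> Z'" using SZ unfolding Z2_def Z0_def by auto
      have "Z2 \<subset> Z" using Z2sub z'(1) by auto
      moreover have "consistent Z2" using z'(2) Z2sub unfolding consistent_def by blast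
      moreover have "sat_prog Z2 (reduct (P \<union> ?A \<union> ?B) Z)"
        unfolding S2 S1
      proof (intro conjI)
        show "sat_prog Z2 (reduct P Z)" unfolding SP
        proof (intro ballI, clarify)
          fix H B assume hb: "(H, B) \<in> P" and sb: "sat Z2 (reduct_form B Z)"
          have "sat Z' (reduct_form B Z)" using sb sat_reduct_mono[OF Z2sub] by blast
          then have hz: "sat Z' (reduct_form H Z)" using s' hb unfolding S1 SP by auto
          have "\<forall>a\<in>reg_atoms H. (Pos a \<in> Z2 \<longleftrightarrow> Pos a \<in> Z')"
          proof -
            have "\<forall>q\<in>Q. q \<notin> reg_atoms H" using assms hb by auto
            then show ?thesis using SZ unfolding Z2_def Z0_def by auto
          qed
          moreover have "\<forall>a. Neg a \<in> Z2 \<longleftrightarrow> Neg a \<in> Z'" unfolding Z2_def Z0_def by auto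
          ultimately show "sat Z2 (reduct_form H Z)"
            using sat_reduct_agree[of H Z2 Z' Z] hz by auto
        qed
        show "\<forall>q\<in>Q. sat Z2 (reduct_form (Def q) Z) \<longrightarrow> Pos q \<in> Z2"
          using fxp unfolding Z2_def T_def by auto
        show "\<forall>q\<in>Q. Pos q \<in> Z2 \<longrightarrow> sat Z2 (reduct_form (Def q) Z)"
        proof (intro ballI impI)
          fix q assume "q \<in> Q" "Pos q \<in> Z2"
          then have "q \<in> S" unfolding Z2_def Z0_def by auto
          then have "q \<in> T S" using fxp by simp
          then show "sat Z2 (reduct_form (Def q) Z)" unfolding T_def Z2_def by auto
        qed
      qed
      ultimately show False using mn by blast
    qed
    then show "answer_set (P \<union> ?A) Z"
      using c s2 unfolding answer_set_def answer_set_nf_def S2 by blast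
  qed
qed

end
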